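(* In the three-point self-training loop with $\Gamma=\infty$, fix a period $t$ with symmetric prior $\pi_t(-\bar\theta)=\pi_t(\bar\theta)=(1-p_t)/2$, $\pi_t(0)=p_t\in[0,1)$, and suppose the users use signals $\sigma_t(0)=\infty$ and $\sigma_t(-\bar\theta)=\sigma_t(\bar\theta)=\sigma\in(0,\infty)$ (held fixed). Then the next-period mass at zero $p_{t+1}=\pi_{t+1}(0)=\mathbb P(\theta^\star_t=0)$ is (1) strictly increasing in $p_t$, and (2) strictly increasing in $\sigma$. Equivalently, since $\mathrm{Var}(\theta^\star_t)=\bar\theta^2(1-p_{t+1})$ and $\mathrm{Var}$ of the prior $\pi_t$ is $\bar\theta^2(1-p_t)$, the output variance at period $t$ is strictly increasing in the variance of the period-$t$ prior and strictly decreasing in $\sigma$.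
   Context: Three-point self-training loop. Fix $\bar\theta>0$, $p_0\in(0,1)$, $\gamma>0$, $\Gamma\in(0,\infty]$. Population preferences $\theta$ take values in $\Theta=\{-\bar\theta,0,\bar\theta\}$ with $\pi_T(-\bar\theta)=\pi_T(\bar\theta)=(1-p_0)/2$, $\pi_T(0)=p_0$. Set $\pi_0=\pi_T$. At period $t$ the AI prior $\pi_t$ is a distribution on $\Theta$. A user of type $\theta$ uses a signal level $\sigma\in[0,\infty]$; the AI observes $s=\theta+\varepsilon$, $\varepsilon\sim N(0,\sigma^2)$, forms the Bayesian posterior $\pi_t(\cdot\mid s)$ (Gaussian likelihood; the prior itself if $\sigma=\infty$), and outputs $\theta_{A,t}(s,\sigma)\in\arg\min_{\hat\theta\in\Theta}\sum_{\vartheta\in\Theta}(\hat\theta-\vartheta)^2\pi_t(\vartheta\mid s)$. With $\Gamma=\infty$ every user uses the AI, so the output is $\theta^\star_t=\theta_{A,t}(s,\sigma_t(\theta))$ with $s\sim N(\theta,\sigma_t(\theta)^2)$, and the next prior is $\pi_{t+1}(\vartheta)=\mathbb P(\theta^\star_t=\vartheta)$ with $\theta\sim\pi_T$. *)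

theory Defs
  imports "HOL-Probability.Probability"
begin

definition Theta :: "real \<Rightarrow> real set" where
  "Theta tb = {- tb, 0, tb}"

definition sym_prior :: "real \<Rightarrow> real \<Rightarrow> real \<Rightarrow> real" where
  "sym_prior tb p x = (if x = 0 then p else if x = tb \<or> x = - tb then (1 - p) / 2 else 0)"

text \<open>For sigma = infinity the signal is uninformative (its value is
  irrelevant, we put it at theta); for sigma = 0 the signal equals theta.\<close>
definition signal_dist :: "real \<Rightarrow> ereal \<Rightarrow> real measure" where
  "signal_dist th sg =
     (if sg = \<infinity> \<or> sg = 0 then return borel th
      else density lborel (\<lambda>s. ennreal (normal_density th (real_of_ereal sg) s)))"

definition posterior :: "real \<Rightarrow> (real \<Rightarrow> real) \<Rightarrow> ereal \<Rightarrow> real \<Rightarrow> real \<Rightarrow> real" where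
  "posterior tb pr sg s v =
     (if sg = \<infinity> then pr v
      else if sg = 0 then (if s \<in> Theta tb then (if v = s then 1 else 0) else pr v)
      else pr v * normal_density v (real_of_ereal sg) s
             / (\<Sum>w\<in>Theta tb. pr w * normal_density w (real_of_ereal sg) s))"

definition exp_loss :: "real \<Rightarrow> (real \<Rightarrow> real) \<Rightarrow> ereal \<Rightarrow> real \<Rightarrow> real \<Rightarrow> real" where
  "exp_loss tb pr sg s h = (\<Sum>v\<in>Theta tb. (h - v)\<^sup>2 * posterior tb pr sg s v)"

text \<open>AI output: a minimiser of the expected loss over Theta tb (ties, which occur only on a
  null set of signals, are broken in favour of 0, then tb, then -tb).\<close>
definition ai_output :: "real \<Rightarrow> (real \<Rightarrow> real) \<Rightarrow> ereal \<Rightarrow> real \<Rightarrow> real" where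
  "ai_output tb pr sg s =
     (let L = exp_loss tb pr sg s in
      if L 0 \<le> L tb \<and> L 0 \<le> L (- tb) then 0
      else if L tb \<le> L (- tb) then tb else - tb)"

lemma ai_output_in_argmin:
  assumes "tb > 0"
  shows "ai_output tb pr sg s \<in> Theta tb \<and>
         (\<forall>h\<in>Theta tb. exp_loss tb pr sg s (ai_output tb pr sg s) \<le> exp_loss tb pr sg s h)"
  unfolding ai_output_def Let_def Theta_def by auto

text \<open>Next-period prior mass at a point x (Gamma = infinity): P(theta* = x), theta ~ pi_T,
  where pi_T is the symmetric population distribution with mass p0 at 0, the AI prior is pr,
  and sgf gives the signal level of each type.\<close>
definition next_mass :: "real \<Rightarrow> real \<Rightarrow> (real \<Rightarrow> real) \<Rightarrow> (real \<Rightarrow> ereal) \<Rightarrow> real \<Rightarrow> real" where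
  "next_mass tb p0 pr sgf x =
     (\<Sum>th\<in>Theta tb. sym_prior tb p0 th *
        measure (signal_dist th (sgf th)) {s \<in> space (signal_dist th (sgf th)).
                                           ai_output tb pr (sgf th) s = x})"

definition sig_policy :: "real \<Rightarrow> real \<Rightarrow> ereal" where
  "sig_policy sg th = (if th = 0 then \<infinity> else ereal sg)"

definition p_next :: "real \<Rightarrow> real \<Rightarrow> real \<Rightarrow> real \<Rightarrow> real" where
  "p_next tb p0 pt sg = next_mass tb p0 (sym_prior tb pt) (sig_policy sg) 0"

end

theory Submission
  imports Defs
begin

lemma std_antideriv: "\<exists>G. \<forall>x. (G has_real_derivative std_normal_density x) (at x)"
proof -
  have "\<exists>F. \<forall>x :: real. -\<infinity> < x \<longrightarrow> x < \<infinity> \<longrightarrow> (F has_vector_derivative std_normal_density x) (at x)"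
    by (rule einterval_antiderivative) (auto simp: normal_density_def intro!: continuous_intros)
  then show ?thesis by (auto simp: has_real_derivative_iff_has_vector_derivative)
qed

lemma dens_interval:
  assumes "\<sigma> > 0" "lo \<le> hi" "\<And>x. (F has_real_derivative normal_density v \<sigma> x) (at x)"
  shows "measure (density lborel (\<lambda>s. ennreal (normal_density v \<sigma> s))) {lo..hi} = F hi - F lo"
proof -
  have int: "(normal_density v \<sigma> has_integral F hi - F lo) {lo..hi}"
    apply (rule fundamental_theorem_of_calculus[OF assms(2)])
    using assms(3) by (auto simp: has_real_derivative_iff_has_vector_derivative[symmetric] intro: has_field_derivative_at_within)
  have nn: "F hi - F lo \<ge> 0"
    using has_integral_nonneg[OF int] by simp
  have "emeasure (density lborel (\<lambda>s. ennreal (normal_density v \<sigma> s))) {lo..hi}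
      = (\<integral>\<^sup>+x. ennreal (normal_density v \<sigma> x) * indicator {lo..hi} x \<partial>lborel)"
    by (subst emeasure_density) auto
  also have "\<dots> = integral\<^sup>N lborel (\<lambda>x. ennreal (indicator {lo..hi} x * normal_density v \<sigma> x))"
    by (rule nn_integral_cong) (auto simp: indicator_def)
  also have "\<dots> = ennreal (F hi - F lo)"
    by (rule nn_integral_has_integral_lebesgue[OF _ int]) simp
  finally show ?thesis using nn by (simp add: measure_def)
qed

definition XX :: "real \<Rightarrow> real" where "XX r = r + sqrt (r\<^sup>2 + 3)"
definition rfun :: "real \<Rightarrow> real \<Rightarrow> real \<Rightarrow> real" where
  "rfun tb pt \<sigma> = pt / (1 - pt) * exp (tb\<^sup>2 / (2 * \<sigma>\<^sup>2))"
definition Sfun :: "real \<Rightarrow> real \<Rightarrow> real \<Rightarrow> real" where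
  "Sfun tb pt \<sigma> = \<sigma>\<^sup>2 * ln (XX (rfun tb pt \<sigma>)) / tb"

lemma XX_ge: "r \<ge> 0 \<Longrightarrow> XX r \<ge> sqrt 3"
  unfolding XX_def by (smt (verit) real_sqrt_le_mono zero_le_power2)

lemma XX_gt1: "r \<ge> 0 \<Longrightarrow> XX r > 1"
  using XX_ge[of r] by (smt (verit) real_sqrt_gt_1_iff)

lemma quad:
  assumes "q > 0" "c > 0" "E > 0" "a \<ge> 0" "n0 > 0"
  shows "q*(n0*c*E) \<le> 3*q*(n0*c/E) + a*n0 \<longleftrightarrow> E \<le> XX (a/(2*q*c))"
proof -
  define r where "r = a/(2*q*c)"
  define R where "R = sqrt (r\<^sup>2 + 3)"
  have R2: "R\<^sup>2 = r\<^sup>2 + 3" unfolding R_def by simp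
  have Rgt: "R > r" unfolding R_def by (smt (verit) real_sqrt_abs real_sqrt_less_mono)
  have Rpos: "R > 0" unfolding R_def by (simp add: add_nonneg_pos)
  have "q*(n0*c*E) \<le> 3*q*(n0*c/E) + a*n0 \<longleftrightarrow> q*c*E*E \<le> 3*q*c + a*E"
  proof -
    have "q*(n0*c*E) \<le> 3*q*(n0*c/E) + a*n0 \<longleftrightarrow> (q*c*E) * (n0*E) \<le> (3*q*c + a*E) * n0"
      using assms by (simp add: field_simps)
    also have "\<dots> \<longleftrightarrow> (q*c*E*E) * n0 \<le> (3*q*c + a*E) * n0"
      by (simp add: algebra_simps)
    also have "\<dots> \<longleftrightarrow> q*c*E*E \<le> 3*q*c + a*E"
      using assms by (simp add: mult.assoc)
    finally show ?thesis .
  qed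
  also have "\<dots> \<longleftrightarrow> (q*c) * (E*E - 2*r*E - 3) \<le> 0"
  proof -
    have "(q*c) * (E*E - 2*r*E - 3) = q*c*E*E - 3*q*c - a*E"
      using assms by (simp add: r_def field_simps)
    then show ?thesis by linarith
  qed
  also have "\<dots> \<longleftrightarrow> E*E - 2*r*E - 3 \<le> 0"
    using assms by (simp add: mult_le_0_iff)
  also have "E*E - 2*r*E - 3 = (E - (r + R)) * (E - (r - R))"
    using R2 by (simp add: algebra_simps power2_eq_square)
  also have "(E - (r + R)) * (E - (r - R)) \<le> 0 \<longleftrightarrow> E \<le> r + R"
    using assms Rgt by (smt (verit) mult_le_0_iff)
  finally show ?thesis unfolding XX_def r_def R_def by simp
qed

lemma sum_Theta: "tb > 0 \<Longrightarrow> (\<Sum>v\<in>Theta tb. f v) = f (-tb) + f 0 + f tb"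
  unfolding Theta_def by (simp add: algebra_simps)

lemma sym_prior_vals:
  assumes "tb > 0"
  shows "sym_prior tb p 0 = p" "sym_prior tb p tb = (1-p)/2" "sym_prior tb p (-tb) = (1-p)/2"
  using assms unfolding sym_prior_def by auto

lemma nd_plus:
  assumes "\<sigma> > 0"
  shows "normal_density tb \<sigma> s = normal_density 0 \<sigma> s * exp(-tb\<^sup>2/(2*\<sigma>\<^sup>2)) * exp(s*tb/\<sigma>\<^sup>2)"
proof -
  have "-(s - tb)\<^sup>2/(2*\<sigma>\<^sup>2) = -(s-0)\<^sup>2/(2*\<sigma>\<^sup>2) + -tb\<^sup>2/(2*\<sigma>\<^sup>2) + s*tb/\<sigma>\<^sup>2"
    using assms by (simp add: field_simps power2_eq_square)
  then have e: "exp (-(s - tb)\<^sup>2/(2*\<sigma>\<^sup>2)) = exp (-(s-0)\<^sup>2/(2*\<sigma>\<^sup>2)) * exp (-tb\<^sup>2/(2*\<sigma>\<^sup>2)) * exp (s*tb/\<sigma>\<^sup>2)"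
    by (simp only: exp_add)
  show ?thesis unfolding normal_density_def e by simp
qed

lemma nd_minus:
  assumes "\<sigma> > 0"
  shows "normal_density (-tb) \<sigma> s = normal_density 0 \<sigma> s * exp(-tb\<^sup>2/(2*\<sigma>\<^sup>2)) / exp(s*tb/\<sigma>\<^sup>2)"
proof -
  have "-(s - -tb)\<^sup>2/(2*\<sigma>\<^sup>2) = -(s-0)\<^sup>2/(2*\<sigma>\<^sup>2) + -tb\<^sup>2/(2*\<sigma>\<^sup>2) + -(s*tb/\<sigma>\<^sup>2)"
    using assms by (simp add: field_simps power2_eq_square)
  then have e: "exp (-(s - -tb)\<^sup>2/(2*\<sigma>\<^sup>2)) = exp (-(s-0)\<^sup>2/(2*\<sigma>\<^sup>2)) * exp (-tb\<^sup>2/(2*\<sigma>\<^sup>2)) * exp (-(s*tb/\<sigma>\<^sup>2))"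
    by (simp only: exp_add)
  show ?thesis unfolding normal_density_def e by (simp add: exp_minus) (simp add: field_simps)
qed

lemma ai_zero_iff:
  assumes tb: "tb > 0" and sg: "\<sigma> > 0" and pt: "0 \<le> pt" "pt < 1"
  shows "ai_output tb (sym_prior tb pt) (ereal \<sigma>) s = 0 \<longleftrightarrow> - Sfun tb pt \<sigma> \<le> s \<and> s \<le> Sfun tb pt \<sigma>"
proof -
  define pr where "pr = sym_prior tb pt"
  define q where "q = (1 - pt)/2"
  define n0 where "n0 = normal_density 0 \<sigma> s"
  define c where "c = exp(-tb\<^sup>2/(2*\<sigma>\<^sup>2))"
  define E where "E = exp(s*tb/\<sigma>\<^sup>2)"
  define np where "np = normal_density tb \<sigma> s"
  define nm where "nm = normal_density (-tb) \<sigma> s"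
  have q: "q > 0" using pt by (simp add: q_def)
  have n0: "n0 > 0" using sg by (simp add: n0_def normal_density_pos)
  have c: "c > 0" and E: "E > 0" by (simp_all add: c_def E_def)
  have np: "np = n0 * c * E" unfolding np_def n0_def c_def E_def by (rule nd_plus[OF sg])
  have nm: "nm = n0 * c / E" unfolding nm_def n0_def c_def E_def by (rule nd_minus[OF sg])
  have prv: "pr 0 = pt" "pr tb = q" "pr (-tb) = q"
    using sym_prior_vals[OF tb] by (simp_all add: pr_def q_def)
  define Z where "Z = q * nm + pt * n0 + q * np"
  have Z: "Z > 0" unfolding Z_def using q pt n0 c E np nm
    by (simp add: add_pos_nonneg add_nonneg_pos)
  have sgne: "ereal \<sigma> \<noteq> \<infinity>" "ereal \<sigma> \<noteq> 0" using sg by auto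
  have L: "exp_loss tb pr (ereal \<sigma>) s h * Z = (h+tb)\<^sup>2 * q * nm + h\<^sup>2 * pt * n0 + (h-tb)\<^sup>2 * q * np" for h
  proof -
    have "exp_loss tb pr (ereal \<sigma>) s h = ((h - -tb)\<^sup>2 * (q * nm) / Z + (h-0)\<^sup>2 * (pt * n0) / Z + (h-tb)\<^sup>2 * (q * np) / Z)"
      unfolding exp_loss_def posterior_def using sgne
      by (simp add: sum_Theta[OF tb] prv Z_def nm_def n0_def np_def)
    then show ?thesis using Z by (simp add: field_simps)
  qed
  have c1: "exp_loss tb pr (ereal \<sigma>) s 0 \<le> exp_loss tb pr (ereal \<sigma>) s tb \<longleftrightarrow> q*(n0*c*E) \<le> 3*q*(n0*c/E) + pt*n0"
  proof -
    have "exp_loss tb pr (ereal \<sigma>) s 0 \<le> exp_loss tb pr (ereal \<sigma>) s tb \<longleftrightarrow>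
       exp_loss tb pr (ereal \<sigma>) s 0 * Z \<le> exp_loss tb pr (ereal \<sigma>) s tb * Z"
      using Z by simp
    also have "\<dots> \<longleftrightarrow> tb\<^sup>2 * (q * np) \<le> tb\<^sup>2 * (3 * q * nm + pt * n0)"
      unfolding L by (simp add: algebra_simps power2_eq_square)
    also have "\<dots> \<longleftrightarrow> q * np \<le> 3 * q * nm + pt * n0"
      using tb by simp
    finally show ?thesis by (simp add: np nm)
  qed
  have c2: "exp_loss tb pr (ereal \<sigma>) s 0 \<le> exp_loss tb pr (ereal \<sigma>) s (-tb) \<longleftrightarrow> q*(n0*c*(1/E)) \<le> 3*q*(n0*c/(1/E)) + pt*n0"
  proof -
    have "exp_loss tb pr (ereal \<sigma>) s 0 \<le> exp_loss tb pr (ereal \<sigma>) s (-tb) \<longleftrightarrow>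
       exp_loss tb pr (ereal \<sigma>) s 0 * Z \<le> exp_loss tb pr (ereal \<sigma>) s (-tb) * Z"
      using Z by simp
    also have "\<dots> \<longleftrightarrow> tb\<^sup>2 * (q * nm) \<le> tb\<^sup>2 * (3 * q * np + pt * n0)"
      unfolding L by (simp add: algebra_simps power2_eq_square)
    also have "\<dots> \<longleftrightarrow> q * nm \<le> 3 * q * np + pt * n0"
      using tb by simp
    finally show ?thesis by (simp add: np nm)
  qed
  have rr: "pt / (2*q*c) = rfun tb pt \<sigma>"
  proof -
    have "1 - pt \<noteq> 0" using pt by simp
    then show ?thesis unfolding rfun_def q_def c_def by (simp add: exp_minus field_simps)
  qed
  define X where "X = XX (rfun tb pt \<sigma>)"
  have X: "X > 0" using XX_gt1[of "rfun tb pt \<sigma>"] pt unfolding X_def rfun_def by simp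
  have S: "Sfun tb pt \<sigma> = \<sigma>\<^sup>2 * ln X / tb" unfolding Sfun_def X_def by simp
  have e1: "E \<le> X \<longleftrightarrow> s \<le> Sfun tb pt \<sigma>"
  proof -
    have "E \<le> X \<longleftrightarrow> s*tb/\<sigma>\<^sup>2 \<le> ln X" unfolding E_def using X by (metis exp_le_cancel_iff exp_ln)
    also have "\<dots> \<longleftrightarrow> s \<le> Sfun tb pt \<sigma>" unfolding S using tb sg by (simp add: field_simps)
    finally show ?thesis .
  qed
  have e2: "1/E \<le> X \<longleftrightarrow> -Sfun tb pt \<sigma> \<le> s"
  proof -
    have "1/E = exp (-(s*tb/\<sigma>\<^sup>2))" unfolding E_def by (simp add: exp_minus divide_inverse)
    then have "1/E \<le> X \<longleftrightarrow> -(s*tb/\<sigma>\<^sup>2) \<le> ln X" using X by (metis exp_le_cancel_iff exp_ln)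
    also have "\<dots> \<longleftrightarrow> -Sfun tb pt \<sigma> \<le> s" unfolding S using tb sg by (simp add: field_simps) linarith
    finally show ?thesis .
  qed
  have "ai_output tb pr (ereal \<sigma>) s = 0 \<longleftrightarrow>
     exp_loss tb pr (ereal \<sigma>) s 0 \<le> exp_loss tb pr (ereal \<sigma>) s tb \<and>
     exp_loss tb pr (ereal \<sigma>) s 0 \<le> exp_loss tb pr (ereal \<sigma>) s (-tb)"
    unfolding ai_output_def Let_def using tb by auto
  also have "\<dots> \<longleftrightarrow> E \<le> X \<and> 1/E \<le> X"
    unfolding c1 c2 X_def rr[symmetric]
    using quad[OF q c E pt(1) n0] quad[OF q c _ pt(1) n0, of "1/E"] E by simp
  finally show ?thesis using e1 e2 unfolding pr_def by auto
qed

lemma ai_inf: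
  assumes "tb > 0" "0 \<le> pt" "pt \<le> 1"
  shows "ai_output tb (sym_prior tb pt) \<infinity> s = 0"
proof -
  have L: "exp_loss tb (sym_prior tb pt) \<infinity> s h = (h+tb)\<^sup>2 * ((1-pt)/2) + h\<^sup>2 * pt + (h-tb)\<^sup>2 * ((1-pt)/2)" for h
    unfolding exp_loss_def posterior_def using assms
    by (simp add: sum_Theta sym_prior_vals)
  have "exp_loss tb (sym_prior tb pt) \<infinity> s tb - exp_loss tb (sym_prior tb pt) \<infinity> s 0 = tb\<^sup>2"
       "exp_loss tb (sym_prior tb pt) \<infinity> s (-tb) - exp_loss tb (sym_prior tb pt) \<infinity> s 0 = tb\<^sup>2"
    unfolding L by (simp_all add: power2_eq_square field_simps)
  then have "exp_loss tb (sym_prior tb pt) \<infinity> s 0 \<le> exp_loss tb (sym_prior tb pt) \<infinity> s tb"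
       "exp_loss tb (sym_prior tb pt) \<infinity> s 0 \<le> exp_loss tb (sym_prior tb pt) \<infinity> s (-tb)"
    by (smt (verit) zero_le_power2)+
  then show ?thesis unfolding ai_output_def Let_def by simp
qed

lemma nd_std: "\<sigma> > 0 \<Longrightarrow> normal_density \<mu> \<sigma> x = std_normal_density ((x - \<mu>)/\<sigma>) / \<sigma>"
  unfolding normal_density_def by (simp add: real_sqrt_mult power_divide)

lemma std_even: "std_normal_density (-y) = std_normal_density y"
  unfolding normal_density_def by simp

definition G0 :: "real \<Rightarrow> real" where
  "G0 = (SOME G. \<forall>x. (G has_real_derivative std_normal_density x) (at x))"

lemma G0_deriv: "(G0 has_real_derivative std_normal_density x) (at x)"
  using someI_ex[OF std_antideriv] unfolding G0_def by blast

lemma Sfun_nonneg: "tb > 0 \<Longrightarrow> 0 \<le> pt \<Longrightarrow> pt < 1 \<Longrightarrow> 0 \<le> Sfun tb pt \<sigma>"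
  unfolding Sfun_def using XX_gt1[of "rfun tb pt \<sigma>"]
  by (simp add: rfun_def)

definition Pfun :: "real \<Rightarrow> real \<Rightarrow> real \<Rightarrow> real" where
  "Pfun tb pt \<sigma> = G0 ((Sfun tb pt \<sigma> - tb)/\<sigma>) - G0 ((- Sfun tb pt \<sigma> - tb)/\<sigma>)"

lemma p_next_formula:
  assumes tb: "tb > 0" and sg: "\<sigma> > 0" and pt: "0 \<le> pt" "pt < 1"
  shows "p_next tb p0 pt \<sigma> = p0 + (1 - p0) * Pfun tb pt \<sigma>"
proof -
  define S where "S = Sfun tb pt \<sigma>"
  have S0: "-S \<le> S" using Sfun_nonneg[OF tb pt] unfolding S_def by simp
  have sd: "signal_dist v (ereal \<sigma>) = density lborel (\<lambda>s. ennreal (normal_density v \<sigma> s))" for v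
    using sg by (auto simp: signal_dist_def)
  have sp: "space (signal_dist v (ereal \<sigma>)) = UNIV" for v
    unfolding sd by simp
  have set: "{s \<in> space (signal_dist v (ereal \<sigma>)). ai_output tb (sym_prior tb pt) (ereal \<sigma>) s = 0} = {-S..S}" for v
  proof (rule set_eqI)
    fix s
    show "s \<in> {s \<in> space (signal_dist v (ereal \<sigma>)). ai_output tb (sym_prior tb pt) (ereal \<sigma>) s = 0} \<longleftrightarrow> s \<in> {-S..S}"
      unfolding sp mem_Collect_eq atLeastAtMost_iff S_def using ai_zero_iff[OF tb sg pt, of s] by blast
  qed
  have d1: "((\<lambda>s. G0 ((s - tb)/\<sigma>)) has_real_derivative normal_density tb \<sigma> x) (at x)" for x
  proof -
    have "((\<lambda>s. G0 ((s - tb)/\<sigma>)) has_real_derivative std_normal_density ((x - tb)/\<sigma>) * (1/\<sigma>)) (at x)"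
      by (rule DERIV_chain2[OF G0_deriv]) (use sg in \<open>auto intro!: derivative_eq_intros\<close>)
    then show ?thesis using nd_std[OF sg] by simp
  qed
  have d2: "((\<lambda>s. - G0 ((- s - tb)/\<sigma>)) has_real_derivative normal_density (-tb) \<sigma> x) (at x)" for x
  proof -
    have "((\<lambda>s. G0 ((- s - tb)/\<sigma>)) has_real_derivative std_normal_density ((- x - tb)/\<sigma>) * (-1/\<sigma>)) (at x)"
      by (rule DERIV_chain2[OF G0_deriv]) (use sg in \<open>auto intro!: derivative_eq_intros\<close>)
    then have "((\<lambda>s. - G0 ((- s - tb)/\<sigma>)) has_real_derivative - (std_normal_density ((- x - tb)/\<sigma>) * (-1/\<sigma>))) (at x)"
      by (rule DERIV_minus)
    moreover have "std_normal_density ((- x - tb)/\<sigma>) = std_normal_density ((x - - tb)/\<sigma>)"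
      using std_even[of "(x - - tb)/\<sigma>"] by (simp add: minus_divide_left)
    ultimately show ?thesis using nd_std[OF sg] by simp
  qed
  have m0: "measure (signal_dist 0 \<infinity>) {s \<in> space (signal_dist 0 \<infinity>). ai_output tb (sym_prior tb pt) \<infinity> s = 0} = 1"
    using ai_inf[OF tb pt(1)] pt unfolding signal_dist_def by (simp add: measure_return)
  have mp: "measure (signal_dist tb (ereal \<sigma>)) {s \<in> space (signal_dist tb (ereal \<sigma>)). ai_output tb (sym_prior tb pt) (ereal \<sigma>) s = 0} = Pfun tb pt \<sigma>"
    unfolding set unfolding sd using dens_interval[OF sg S0 d1] unfolding Pfun_def S_def by simp
  have mm: "measure (signal_dist (-tb) (ereal \<sigma>)) {s \<in> space (signal_dist (-tb) (ereal \<sigma>)). ai_output tb (sym_prior tb pt) (ereal \<sigma>) s = 0} = Pfun tb pt \<sigma>"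
    unfolding set unfolding sd using dens_interval[OF sg S0 d2] unfolding Pfun_def S_def by simp
  show ?thesis
    unfolding p_next_def next_mass_def sum_Theta[OF tb] sig_policy_def
    using tb m0 mp mm by (simp add: sym_prior_vals algebra_simps)
qed

lemma G0_strict: "a < b \<Longrightarrow> G0 a < G0 b"
  by (rule DERIV_pos_imp_increasing) (auto intro!: G0_deriv simp: normal_density_pos)

lemma XX_strict: "0 \<le> r1 \<Longrightarrow> r1 < r2 \<Longrightarrow> XX r1 < XX r2"
proof -
  assume a: "0 \<le> r1" "r1 < r2"
  then have "r1\<^sup>2 + 3 < r2\<^sup>2 + 3" by (simp add: power_strict_mono)
  then have "sqrt (r1\<^sup>2 + 3) < sqrt (r2\<^sup>2 + 3)" by (simp only: real_sqrt_less_iff)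
  then show ?thesis unfolding XX_def using a by linarith
qed

lemma rfun_strict:
  assumes "0 \<le> p1" "p1 < p2" "p2 < 1"
  shows "rfun tb p1 \<sigma> < rfun tb p2 \<sigma>"
proof -
  have "p1 / (1 - p1) < p2 / (1 - p2)"
    using assms by (simp add: field_simps)
  then have "p1 / (1 - p1) * exp (tb\<^sup>2 / (2 * \<sigma>\<^sup>2)) < p2 / (1 - p2) * exp (tb\<^sup>2 / (2 * \<sigma>\<^sup>2))"
    by (simp only: mult_less_cancel_right_pos exp_gt_zero)
  then show ?thesis unfolding rfun_def .
qed

lemma rfun_nonneg: "0 \<le> p \<Longrightarrow> p < 1 \<Longrightarrow> 0 \<le> rfun tb p \<sigma>"
  unfolding rfun_def by simp

lemma Sfun_strict:
  assumes "tb > 0" "\<sigma> > 0" "0 \<le> p1" "p1 < p2" "p2 < 1"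
  shows "Sfun tb p1 \<sigma> < Sfun tb p2 \<sigma>"
proof -
  have r: "0 \<le> rfun tb p1 \<sigma>" using assms by (simp add: rfun_nonneg)
  have "XX (rfun tb p1 \<sigma>) < XX (rfun tb p2 \<sigma>)"
    using XX_strict[OF r rfun_strict[OF assms(3-5)]] .
  moreover have "XX (rfun tb p1 \<sigma>) > 0" using XX_gt1[OF r] by simp
  ultimately have "ln (XX (rfun tb p1 \<sigma>)) < ln (XX (rfun tb p2 \<sigma>))" by simp
  then show ?thesis unfolding Sfun_def using assms by (simp add: divide_strict_right_mono)
qed

lemma Pfun_strict_pt:
  assumes "tb > 0" "\<sigma> > 0" "0 \<le> p1" "p1 < p2" "p2 < 1"
  shows "Pfun tb p1 \<sigma> < Pfun tb p2 \<sigma>"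
proof -
  have S: "Sfun tb p1 \<sigma> < Sfun tb p2 \<sigma>" by (rule Sfun_strict[OF assms])
  have "G0 ((Sfun tb p1 \<sigma> - tb)/\<sigma>) < G0 ((Sfun tb p2 \<sigma> - tb)/\<sigma>)"
    using S assms by (intro G0_strict) (simp add: divide_strict_right_mono)
  moreover have "G0 ((- Sfun tb p2 \<sigma> - tb)/\<sigma>) < G0 ((- Sfun tb p1 \<sigma> - tb)/\<sigma>)"
    using S assms by (intro G0_strict) (simp add: divide_strict_right_mono)
  ultimately show ?thesis unfolding Pfun_def by simp
qed

definition rf :: "real \<Rightarrow> real \<Rightarrow> real" where "rf b u = b * exp (u\<^sup>2/2)"
definition Rf :: "real \<Rightarrow> real \<Rightarrow> real" where "Rf b u = sqrt ((rf b u)\<^sup>2 + 3)"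
definition gf :: "real \<Rightarrow> real \<Rightarrow> real" where "gf b u = ln (rf b u + Rf b u)"

lemma Rf_pos: "Rf b u > 0" unfolding Rf_def by (simp add: add_nonneg_pos)
lemma Rf_sq: "(Rf b u)\<^sup>2 = (rf b u)\<^sup>2 + 3" unfolding Rf_def by (simp add: add_nonneg_pos)
lemma rf_nonneg: "b \<ge> 0 \<Longrightarrow> rf b u \<ge> 0" unfolding rf_def by simp
lemma X_gt1: "b \<ge> 0 \<Longrightarrow> rf b u + Rf b u > 1"
  using XX_gt1[OF rf_nonneg] unfolding XX_def Rf_def by blast
lemma gf_pos: "b \<ge> 0 \<Longrightarrow> gf b u > 0"
  unfolding gf_def using X_gt1[of b u] by simp

lemma rf_deriv: "(rf b has_real_derivative rf b u * u) (at u)"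
  unfolding rf_def by (auto intro!: derivative_eq_intros)

lemma Rf_deriv: "(Rf b has_real_derivative rf b u * (rf b u * u) / Rf b u) (at u)"
proof -
  have "((\<lambda>u. sqrt ((rf b u)\<^sup>2 + 3)) has_real_derivative inverse (sqrt ((rf b u)\<^sup>2 + 3)) / 2 * (2 * rf b u * (rf b u * u))) (at u)"
    by (auto intro!: derivative_eq_intros rf_deriv simp: add_nonneg_pos)
      (smt (verit) zero_le_power2)+
  then show ?thesis unfolding Rf_def[abs_def] by (simp add: field_simps Rf_def[symmetric])
qed

lemma gf_deriv:
  assumes "b \<ge> 0"
  shows "(gf b has_real_derivative rf b u * u / Rf b u) (at u)"
proof -
  have X: "rf b u + Rf b u > 0" using X_gt1[OF assms, of u] by simp
  have R: "Rf b u > 0" by (rule Rf_pos)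
  have "((\<lambda>u. ln (rf b u + Rf b u)) has_real_derivative (rf b u * u + rf b u * (rf b u * u) / Rf b u) / (rf b u + Rf b u)) (at u)"
    by (rule derivative_eq_intros rf_deriv Rf_deriv | use X in simp)+
  moreover have "(rf b u * u + rf b u * (rf b u * u) / Rf b u) / (rf b u + Rf b u) = rf b u * u / Rf b u"
  proof -
    have "rf b u * u + rf b u * (rf b u * u) / Rf b u = (rf b u * u / Rf b u) * (rf b u + Rf b u)"
      using R by (simp add: field_simps)
    then show ?thesis using X by simp
  qed
  ultimately show ?thesis unfolding gf_def[abs_def] by simp
qed

definition Hf :: "real \<Rightarrow> real \<Rightarrow> real" where
  "Hf b u = G0 (gf b u / u - u) - G0 (- gf b u / u - u)"

lemma Hf_deriv:
  assumes b: "b \<ge> 0" and u: "u > 0"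
  defines "D \<equiv> (rf b u * u / Rf b u * u - gf b u) / u\<^sup>2"
  shows "(Hf b has_real_derivative
     std_normal_density (gf b u / u - u) * (D - 1) - std_normal_density (- gf b u / u - u) * (- D - 1)) (at u)"
proof -
  have dU: "((\<lambda>u. gf b u / u - u) has_real_derivative D - 1) (at u)"
  proof -
    have "((\<lambda>u. gf b u / u - u) has_real_derivative (rf b u * u / Rf b u * u - gf b u * 1) / (u * u) - 1) (at u)"
      by (rule derivative_eq_intros gf_deriv[OF b] refl | use u in simp)+
    moreover have "(rf b u * u / Rf b u * u - gf b u * 1) / (u * u) - 1 = D - 1"
      unfolding D_def by (simp add: power2_eq_square)
    ultimately show ?thesis by (simp only:)
  qed
  have dL: "((\<lambda>u. - gf b u / u - u) has_real_derivative - D - 1) (at u)"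
  proof -
    have "((\<lambda>u. - gf b u / u - u) has_real_derivative (- (rf b u * u / Rf b u) * u - - gf b u * 1) / (u * u) - 1) (at u)"
      by (rule derivative_eq_intros gf_deriv[OF b] refl | use u in simp)+
    moreover have "(- (rf b u * u / Rf b u) * u - - gf b u * 1) / (u * u) - 1 = - D - 1"
      unfolding D_def using u by (simp add: power2_eq_square field_simps)
    ultimately show ?thesis by (simp only:)
  qed
  have "((\<lambda>u. G0 (gf b u / u - u) - G0 (- gf b u / u - u)) has_real_derivative
     std_normal_density (gf b u / u - u) * (D - 1) - std_normal_density (- gf b u / u - u) * (- D - 1)) (at u)"
    by (intro DERIV_diff DERIV_chain2[OF G0_deriv] dU dL)
  then show ?thesis unfolding Hf_def[abs_def] .
qed

lemma key_alg:
  fixes r R :: real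
  assumes "R > 0" "R * R = r * r + 3" "r \<ge> 0"
  shows "r * ((r+R)\<^sup>2 + 1) - R * ((r+R)\<^sup>2 - 1) = - 2 * (r + R)"
  using assms unfolding power2_eq_square by algebra

lemma Hf_deriv_neg:
  assumes b: "b \<ge> 0" and u: "u > 0"
  defines "D \<equiv> (rf b u * u / Rf b u * u - gf b u) / u\<^sup>2"
  shows "std_normal_density (gf b u / u - u) * (D - 1) - std_normal_density (- gf b u / u - u) * (- D - 1) < 0"
proof -
  define r where "r = rf b u"
  define R where "R = Rf b u"
  define g where "g = gf b u"
  define X where "X = r + R"
  have R: "R > 0" unfolding R_def by (rule Rf_pos)
  have RR: "R * R = r * r + 3" using Rf_sq[of b u] unfolding R_def r_def power2_eq_square .
  have r: "r \<ge> 0" unfolding r_def using rf_nonneg[OF b] .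
  have X: "X > 1" unfolding X_def r_def R_def using X_gt1[OF b] .
  have g: "g > 0" unfolding g_def using gf_pos[OF b] .
  have gX: "exp g = X" unfolding g_def gf_def X_def r_def R_def using X_gt1[OF b, of u] by simp
  define U where "U = g/u - u"
  define L where "L = - g/u - u"
  have LU: "- L\<^sup>2 / 2 = - U\<^sup>2 / 2 + - (2 * g)"
    unfolding L_def U_def using u by (simp add: power2_eq_square field_simps)
  have e2: "exp (- (2 * g)) = 1 / X\<^sup>2"
    by (simp add: exp_minus gX[symmetric] power2_eq_square exp_add[symmetric] divide_inverse)
  have phiL: "std_normal_density L = std_normal_density U / X\<^sup>2"
  proof -
    have "exp (- L\<^sup>2 / 2) = exp (- U\<^sup>2 / 2) * exp (- (2 * g))" unfolding LU by (simp only: exp_add)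
    then show ?thesis unfolding std_normal_density_def e2 by simp
  qed
  have phiU: "std_normal_density U > 0" by (simp add: normal_density_pos)
  have Dform: "D = r / R - g / u\<^sup>2"
    unfolding D_def r_def R_def g_def using u R unfolding R_def by (simp add: field_simps power2_eq_square)
  have id: "r * (X\<^sup>2 + 1) - R * (X\<^sup>2 - 1) = - 2 * X"
    unfolding X_def by (rule key_alg[OF R RR r])
  have N: "D * (X\<^sup>2 + 1) - (X\<^sup>2 - 1) = - 2 * X / R - g / u\<^sup>2 * (X\<^sup>2 + 1)"
  proof -
    have "D * (X\<^sup>2 + 1) - (X\<^sup>2 - 1) = (r * (X\<^sup>2 + 1) - R * (X\<^sup>2 - 1)) / R - g / u\<^sup>2 * (X\<^sup>2 + 1)"
      unfolding Dform using R by (simp add: field_simps)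
    then show ?thesis unfolding id .
  qed
  have Nneg: "D * (X\<^sup>2 + 1) - (X\<^sup>2 - 1) < 0"
  proof -
    have "- 2 * X / R < 0" using X R by (simp add: divide_neg_pos)
    moreover have "g / u\<^sup>2 * (X\<^sup>2 + 1) > 0" using g u by (simp add: add_nonneg_pos)
    ultimately show ?thesis unfolding N by linarith
  qed
  have "(D - 1) + (D + 1) / X\<^sup>2 = (D * (X\<^sup>2 + 1) - (X\<^sup>2 - 1)) / X\<^sup>2"
    using X by (simp add: field_simps)
  also have "\<dots> < 0" using Nneg X by (simp add: divide_neg_pos)
  finally have neg: "(D - 1) + (D + 1) / X\<^sup>2 < 0" .
  have "std_normal_density U * (D - 1) - std_normal_density L * (- D - 1)
      = std_normal_density U * ((D - 1) + (D + 1) / X\<^sup>2)"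
    unfolding phiL using X by (simp add: field_simps)
  also have "\<dots> < 0" using phiU neg by (simp add: mult_pos_neg)
  finally show ?thesis unfolding U_def L_def g_def .
qed

lemma Hf_strict:
  assumes b: "b \<ge> 0" and "0 < u1" "u1 < u2"
  shows "Hf b u2 < Hf b u1"
  by (rule DERIV_neg_imp_decreasing[OF assms(3)])
     (use assms in \<open>auto intro!: exI Hf_deriv Hf_deriv_neg\<close>)

lemma Pfun_H:
  assumes tb: "tb > 0" and sg: "\<sigma> > 0" and pt: "0 \<le> pt" "pt < 1"
  shows "Pfun tb pt \<sigma> = Hf (pt/(1-pt)) (tb/\<sigma>)"
proof -
  define b where "b = pt/(1-pt)"
  define u where "u = tb/\<sigma>"
  have r: "rfun tb pt \<sigma> = rf b u"
    unfolding rfun_def rf_def b_def u_def by (simp add: power_divide)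
  have S: "Sfun tb pt \<sigma> = \<sigma>\<^sup>2 * gf b u / tb"
    unfolding Sfun_def r gf_def XX_def Rf_def ..
  have u: "u > 0" unfolding u_def using tb sg by simp
  have e1: "(Sfun tb pt \<sigma> - tb)/\<sigma> = gf b u / u - u"
    unfolding S u_def using tb sg by (simp add: field_simps power2_eq_square)
  have e2: "(- Sfun tb pt \<sigma> - tb)/\<sigma> = - gf b u / u - u"
    unfolding S u_def using tb sg by (simp add: field_simps power2_eq_square)
  show ?thesis unfolding Pfun_def e1 e2 Hf_def b_def u_def ..
qed

theorem mainTheorem16:
  fixes tb p0 :: real
  assumes "tb > 0" and "0 < p0" and "p0 < 1"
  shows "(\<forall>sg > 0. strict_mono_on {0..<1} (\<lambda>pt. p_next tb p0 pt sg))
       \<and> (\<forall>pt \<in> {0..<1}. strict_mono_on {0<..} (\<lambda>sg. p_next tb p0 pt sg))"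
proof (intro conjI allI impI ballI)
  fix sg :: real assume sg: "sg > 0"
  show "strict_mono_on {0..<1} (\<lambda>pt. p_next tb p0 pt sg)"
  proof (rule strict_mono_onI)
    fix p1 p2 :: real assume "p1 \<in> {0..<1}" and "p2 \<in> {0..<1}" and "p1 < p2"
    then have "Pfun tb p1 sg < Pfun tb p2 sg"
      using Pfun_strict_pt[OF assms(1) sg] by auto
    then show "p_next tb p0 p1 sg < p_next tb p0 p2 sg"
      using p_next_formula[OF assms(1) sg] \<open>p1 \<in> {0..<1}\<close> \<open>p2 \<in> {0..<1}\<close> assms(3) by simp
  qed
next
  fix pt :: real assume pt: "pt \<in> {0..<1}"
  show "strict_mono_on {0<..} (\<lambda>sg. p_next tb p0 pt sg)"
  proof (rule strict_mono_onI)
    fix s1 s2 :: real assume s: "s1 \<in> {0<..}" "s2 \<in> {0<..}" "s1 < s2"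
    have b: "pt/(1-pt) \<ge> 0" using pt by simp
    have "tb/s2 < tb/s1" using s assms(1) by (auto intro!: divide_strict_left_mono)
    moreover have "0 < tb/s2" using s assms(1) by simp
    ultimately have "Hf (pt/(1-pt)) (tb/s1) < Hf (pt/(1-pt)) (tb/s2)"
      using Hf_strict[OF b] by blast
    then have "Pfun tb pt s1 < Pfun tb pt s2"
      using Pfun_H[OF assms(1)] s pt by auto
    then show "p_next tb p0 pt s1 < p_next tb p0 pt s2"
      using p_next_formula[OF assms(1)] s pt assms(3) by simp
  qed
qed

end
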